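(* Let $n\ge2$ and let $P(x)=a_0+a_1x+\dots+a_nx^n\in\mathbb{Z}[x]$ with $a_n\neq0$ and $\max_i|a_i|=|a_n|$. Let $Q>1$ and suppose there exist $w,\kappa,\eta\in\mathbb{R}$ with $w>0$, $-\frac w2<\eta<\frac w2$, and an interval $J$ with $|J|\gg Q^{-\frac w2-\eta}$ such that $r(P)=Q^{-\kappa}$ and $|P(x)|<|a_n|Q^{-w}$ for all $x\in J$. Then the discriminant of $P$ satisfies $$|D(P)|\ll |a_n|^{2n-2}\,Q^{-w-(n-1)(n-2)\kappa+2\eta}.$$
   Context: $r(P)$ denotes the largest distance between two (complex) roots of $P$; $D(P)$ is the discriminant of $P$. The notation $A\ll B$ means $A\le cB$ for a constant $c>0$ depending only on $n$ and on the implied constant in the hypothesis $|J|\gg Q^{-w/2-\eta}$ (not on $P$, $Q$, $w$, $\kappa$, $\eta$). *)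

theory Defs
  imports "HOL-Analysis.Analysis" "HOL-Computational_Algebra.Computational_Algebra"
begin

definition croots :: "int poly \<Rightarrow> complex multiset" where
  "croots p = proots (map_poly of_int p)"

definition root_dist :: "int poly \<Rightarrow> real" where
  "root_dist p = Max {cmod (x - y) | x y. x \<in># croots p \<and> y \<in># croots p}"

text \<open>Discriminant D(P) = a_n^(2n-2) * prod_{i<j} (alpha_i - alpha_j)^2
  = (-1)^(n(n-1)/2) a_n^(2n-2) prod_{i \<noteq> j} (alpha_i - alpha_j),
  roots counted with multiplicity.\<close>
definition discriminant :: "int poly \<Rightarrow> complex" where
  "discriminant p =
     (let R = croots p; n = degree p in
      (-1) ^ (n * (n - 1) div 2) * of_int (lead_coeff p) ^ (2 * n - 2) *
      (\<Prod>x\<in>#R. \<Prod>y\<in>#(R - {#x#}). x - y))"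

end

theory Submission
  imports Defs
begin

lemma poly_eval:
  fixes P :: "int poly" and x :: real
  shows "cmod (complex_of_real (poly (map_poly real_of_int P) x)) =
         \<bar>real_of_int (lead_coeff P)\<bar> * (\<Prod>y\<in>#croots P. cmod (complex_of_real x - y))"
proof -
  define p where "p = (map_poly of_int P :: complex poly)"
  have lc: "lead_coeff p = of_int (lead_coeff P)"
    unfolding p_def
    by (cases "P = 0") (simp_all add: lead_coeff_map_poly_nz)
  have cr: "croots P = proots p" by (simp add: croots_def p_def)
  have "of_real (poly (map_poly real_of_int P) x) = poly p (of_real x)"
    unfolding p_def by (induction P) (auto simp: map_poly_pCons)
  also have "\<dots> = poly (smult (lead_coeff p) (\<Prod>y\<in>#proots p. [:-y, 1:])) (of_real x)"
    using complex_poly_decompose_multiset[of p] by simp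
  also have "\<dots> = of_int (lead_coeff P) * (\<Prod>y\<in>#croots P. (of_real x - y))"
    using lc cr by (simp add: poly_prod_mset)
  finally have e: "complex_of_real (poly (map_poly real_of_int P) x) = of_int (lead_coeff P) * (\<Prod>y\<in>#croots P. (of_real x - y))" .
  have n: "\<And>M::complex multiset. cmod (\<Prod>y\<in>#M. (of_real x - y)) = (\<Prod>y\<in>#M. cmod (of_real x - y))"
  proof -
    fix M :: "complex multiset" show "cmod (\<Prod>y\<in>#M. (of_real x - y)) = (\<Prod>y\<in>#M. cmod (of_real x - y))"
      by (induction M) (simp_all add: norm_mult)
  qed
  show ?thesis unfolding e by (simp add: norm_mult n)
qed

lemma prod_mset_nonneg':
  fixes f :: "'a \<Rightarrow> real"
  assumes "\<And>x. x \<in># M \<Longrightarrow> 0 \<le> f x"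
  shows "0 \<le> (\<Prod>x\<in>#M. f x)"
  using assms by (induction M) auto

lemma prod_mset_mono':
  fixes f g :: "'a \<Rightarrow> real"
  assumes "\<And>x. x \<in># M \<Longrightarrow> 0 \<le> f x \<and> f x \<le> g x"
  shows "(\<Prod>x\<in>#M. f x) \<le> (\<Prod>x\<in>#M. g x)"
  using assms
proof (induction M)
  case empty then show ?case by simp
next
  case (add a M)
  have "0 \<le> (\<Prod>x\<in>#M. f x)" using add.prems by (auto intro!: prod_mset_nonneg')
  moreover have fa: "0 \<le> f a \<and> f a \<le> g a" using add.prems by simp
  moreover have "0 \<le> g a" using fa by linarith
  moreover have "(\<Prod>x\<in>#M. f x) \<le> (\<Prod>x\<in>#M. g x)" using add.IH add.prems by simp
  ultimately show ?case by (simp add: mult_mono)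
qed

lemma key1:
  fixes R :: "complex multiset" and x :: complex
  assumes "R \<noteq> {#}"
  shows "\<exists>\<alpha>. \<alpha> \<in># R \<and> (\<forall>y\<in>#R. cmod (x - \<alpha>) \<le> cmod (x - y)) \<and>
     (\<Prod>y\<in>#R-{#\<alpha>#}. cmod (\<alpha> - y)) * cmod (x - \<alpha>) \<le> 2 ^ (size R - 1) * (\<Prod>y\<in>#R. cmod (x - y))"
proof -
  define S where "S = (\<lambda>y. cmod (x - y)) ` set_mset R"
  have fS: "finite S" "S \<noteq> {}" using assms by (auto simp: S_def)
  have "Min S \<in> S" using Min_in[OF fS] .
  then obtain \<alpha> where a: "\<alpha> \<in># R" "cmod (x - \<alpha>) = Min S" unfolding S_def by auto
  have amin: "\<forall>y\<in>#R. cmod (x - \<alpha>) \<le> cmod (x - y)"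
    using a fS by (auto simp: S_def)
  define R' where "R' = R - {#\<alpha>#}"
  have RR: "R = add_mset \<alpha> R'" using a by (simp add: R'_def)
  have "(\<Prod>y\<in>#R'. cmod (\<alpha> - y)) \<le> (\<Prod>y\<in>#R'. 2 * cmod (x - y))"
  proof (rule prod_mset_mono')
    fix y assume "y \<in># R'"
    then have "y \<in># R" by (simp add: RR)
    then have "cmod (x - \<alpha>) \<le> cmod (x - y)" using amin by auto
    moreover have "cmod (\<alpha> - y) \<le> cmod (x - \<alpha>) + cmod (x - y)"
      using norm_triangle_ineq4[of "x - y" "x - \<alpha>"] by (simp add: norm_minus_commute)
    ultimately show "0 \<le> cmod (\<alpha> - y) \<and> cmod (\<alpha> - y) \<le> 2 * cmod (x - y)" by simp
  qed
  also have "\<dots> = 2 ^ size R' * (\<Prod>y\<in>#R'. cmod (x - y))"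
    by (induction R') (simp_all add: algebra_simps)
  finally have "(\<Prod>y\<in>#R'. cmod (\<alpha> - y)) * cmod (x - \<alpha>) \<le> 2 ^ size R' * (\<Prod>y\<in>#R'. cmod (x - y)) * cmod (x - \<alpha>)"
    by (simp add: mult_right_mono)
  also have "\<dots> = 2 ^ (size R - 1) * (\<Prod>y\<in>#R. cmod (x - y))"
    by (simp add: RR)
  finally show ?thesis using a amin R'_def by auto
qed

lemma key2:
  fixes R :: "complex multiset" and r :: real
  assumes "\<alpha> \<in># R" and "\<And>x y. x \<in># R \<Longrightarrow> y \<in># R \<Longrightarrow> cmod (x - y) \<le> r"
  shows "(\<Prod>x\<in>#R. \<Prod>y\<in>#(R - {#x#}). cmod (x - y)) \<le>
     (\<Prod>y\<in>#R-{#\<alpha>#}. cmod (\<alpha> - y)) ^ 2 * r ^ ((size R - 1) * (size R - 2))"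
proof -
  define R' where "R' = R - {#\<alpha>#}"
  have RR: "R = add_mset \<alpha> R'" using assms by (simp add: R'_def)
  have r0: "0 \<le> r" using assms(2)[OF assms(1) assms(1)] by simp
  have E1: "(\<Prod>x\<in>#R. \<Prod>y\<in>#(R - {#x#}). cmod (x - y)) =
     (\<Prod>y\<in>#R'. cmod (\<alpha> - y)) * (\<Prod>x\<in>#R'. \<Prod>y\<in>#(add_mset \<alpha> R' - {#x#}). cmod (x - y))"
    by (simp add: RR)
  have E2: "(\<Prod>x\<in>#R'. \<Prod>y\<in>#(add_mset \<alpha> R' - {#x#}). cmod (x - y)) \<le>
      (\<Prod>x\<in>#R'. cmod (\<alpha> - x) * r ^ (size R' - 1))"
  proof (rule prod_mset_mono')
    fix x assume x: "x \<in># R'"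
    have e: "add_mset \<alpha> R' - {#x#} = add_mset \<alpha> (R' - {#x#})"
      using x by (simp add: diff_union_swap2)
    have "(\<Prod>y\<in>#(R' - {#x#}). cmod (x - y)) \<le> (\<Prod>y\<in>#(R' - {#x#}). r)"
      by (rule prod_mset_mono') (use x assms(2) RR in \<open>auto dest: in_diffD\<close>)
    also have "\<dots> = r ^ (size R' - 1)" using x by (simp add: size_Diff_singleton)
    finally have b: "(\<Prod>y\<in>#(R' - {#x#}). cmod (x - y)) \<le> r ^ (size R' - 1)" .
    have p0: "0 \<le> (\<Prod>y\<in>#(R' - {#x#}). cmod (x - y))" by (rule prod_mset_nonneg') simp
    show "0 \<le> (\<Prod>y\<in>#(add_mset \<alpha> R' - {#x#}). cmod (x - y)) \<and>
      (\<Prod>y\<in>#(add_mset \<alpha> R' - {#x#}). cmod (x - y)) \<le> cmod (\<alpha> - x) * r ^ (size R' - 1)"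
      using b p0 by (simp add: e mult_left_mono norm_minus_commute)
  qed
  have E3: "(\<Prod>x\<in>#R'. cmod (\<alpha> - x) * r ^ (size R' - 1)) = (\<Prod>x\<in>#R'. cmod (\<alpha> - x)) * r ^ (size R' * (size R' - 1))"
    by (simp add: prod_mset.distrib) (metis power_mult mult.commute)
  have "(\<Prod>x\<in>#R. \<Prod>y\<in>#(R - {#x#}). cmod (x - y)) \<le> (\<Prod>y\<in>#R'. cmod (\<alpha> - y)) * ((\<Prod>x\<in>#R'. cmod (\<alpha> - x)) * r ^ (size R' * (size R' - 1)))"
    unfolding E1 using E2 E3 by (auto intro!: mult_left_mono prod_mset_nonneg')
  also have "\<dots> = (\<Prod>y\<in>#R'. cmod (\<alpha> - y)) ^ 2 * r ^ ((size R - 1) * (size R - 2))"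
    by (simp add: RR power2_eq_square diff_Suc)
  finally show ?thesis unfolding R'_def .
qed

lemma card_set_mset_le: "card (set_mset M) \<le> size M"
  by (induction M) (auto simp: card_insert_if)

lemma norm_prod_mset_c: "cmod (\<Prod>x\<in>#M. f x) = (\<Prod>x\<in>#M. cmod (f x))"
  by (induction M) (simp_all add: norm_mult)

lemma pigeon:
  fixes R :: "complex multiset" and a \<delta> :: real and n :: nat
  assumes "size R \<le> n" "\<delta> > 0"
  shows "\<exists>k\<le>n. \<forall>y\<in>#R. \<delta> \<le> \<bar>(a + (2 * real k + 1) * \<delta>) - Re y\<bar>"
proof (rule ccontr)
  assume "\<not> ?thesis"
  then have bad: "\<forall>k\<in>{0..n}. \<exists>y\<in>#R. \<bar>(a + (2 * real k + 1) * \<delta>) - Re y\<bar> < \<delta>"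
    by (meson atLeastAtMost_iff not_le)
  define g where "g k = (SOME y. y \<in># R \<and> \<bar>(a + (2 * real k + 1) * \<delta>) - Re y\<bar> < \<delta>)" for k
  have g: "g k \<in># R \<and> \<bar>(a + (2 * real k + 1) * \<delta>) - Re (g k)\<bar> < \<delta>" if "k \<in> {0..n}" for k
    unfolding g_def using bad that by (metis (no_types, lifting) someI_ex)
  have "inj_on g {0..n}"
  proof
    fix k1 k2 assume k: "k1 \<in> {0..n}" "k2 \<in> {0..n}" "g k1 = g k2"
    have "\<bar>(a + (2 * real k1 + 1) * \<delta>) - (a + (2 * real k2 + 1) * \<delta>)\<bar> < 2 * \<delta>"
    proof -
      have h: "\<And>u v t. \<bar>u - t\<bar> < \<delta> \<Longrightarrow> \<bar>v - t\<bar> < \<delta> \<Longrightarrow> \<bar>u - v\<bar> < 2 * \<delta>" by arith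
      show ?thesis using g[OF k(1)] g[OF k(2)] k(3) by (intro h[of _ "Re (g k1)"]) auto
    qed
    moreover have "(a + (2 * real k1 + 1) * \<delta>) - (a + (2 * real k2 + 1) * \<delta>) = (2 * \<delta>) * (real k1 - real k2)"
      by (simp add: algebra_simps)
    ultimately have "(2 * \<delta>) * \<bar>real k1 - real k2\<bar> < (2 * \<delta>) * 1" using assms(2)
      by (simp add: abs_mult)
    then have "\<bar>real k1 - real k2\<bar> < 1" using assms(2)
      by (subst (asm) mult_less_cancel_left_pos) auto
    then show "k1 = k2" by linarith
  qed
  moreover have "g ` {0..n} \<subseteq> set_mset R" using g by auto
  ultimately have "card {0..n} \<le> card (set_mset R)"
    by (meson card_inj_on_le finite_set_mset)
  then show False using card_set_mset_le[of R] assms(1) by simp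
qed


theorem lemma4:
  fixes n :: nat and c :: real
  assumes "n \<ge> 2" and "c > 0"
  shows "\<exists>C>0. \<forall>(P::int poly) (Q::real) (w::real) (\<kappa>::real) (\<eta>::real) (a::real) (b::real).
      degree P = n \<longrightarrow>
      (\<forall>i. \<bar>coeff P i\<bar> \<le> \<bar>lead_coeff P\<bar>) \<longrightarrow>
      Q > 1 \<longrightarrow> w > 0 \<longrightarrow> - (w / 2) < \<eta> \<longrightarrow> \<eta> < w / 2 \<longrightarrow>
      a < b \<longrightarrow> b - a \<ge> c * Q powr (- (w / 2) - \<eta>) \<longrightarrow>
      root_dist P = Q powr (- \<kappa>) \<longrightarrow>
      (\<forall>x\<in>{a<..<b}. \<bar>poly (map_poly real_of_int P) x\<bar> < \<bar>real_of_int (lead_coeff P)\<bar> * Q powr (- w)) \<longrightarrow>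
      cmod (discriminant P) \<le>
        C * \<bar>real_of_int (lead_coeff P)\<bar> ^ (2 * n - 2) *
          Q powr (- w - real ((n - 1) * (n - 2)) * \<kappa> + 2 * \<eta>)"
proof -
  define K :: real where "K = 2 ^ n * (real n + 1)"
  have K0: "K > 0" by (simp add: K_def)
  define C where "C = K ^ 2 / c ^ 2"
  have C0: "C > 0" using K0 assms(2) by (simp add: C_def)
  show ?thesis
  proof (intro exI[of _ C] conjI C0 allI impI)
    fix P :: "int poly" and Q w \<kappa> \<eta> a b :: real
    assume degP: "degree P = n" and Q1: "Q > 1" and w0: "w > 0"
      and ab: "a < b" and Lc: "b - a \<ge> c * Q powr (- (w / 2) - \<eta>)"
      and rd: "root_dist P = Q powr (- \<kappa>)"
      and small: "\<forall>x\<in>{a<..<b}. \<bar>poly (map_poly real_of_int P) x\<bar> < \<bar>real_of_int (lead_coeff P)\<bar> * Q powr (- w)"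
    define R where "R = croots P"
    define A where "A = \<bar>real_of_int (lead_coeff P)\<bar>"
    have P0: "P \<noteq> 0" using degP assms(1) by auto
    have A0: "A > 0" using P0 by (simp add: A_def)
    have sizeR: "size R = n"
      unfolding R_def croots_def using degP
      by (simp add: size_proots_complex degree_map_poly)
    have Rne: "R \<noteq> {#}" using sizeR assms(1) by auto
    define L where "L = b - a"
    have L0: "L > 0" using ab by (simp add: L_def)
    define \<delta> where "\<delta> = L / (2 * (real n + 1))"
    have d0: "\<delta> > 0" using L0 by (simp add: \<delta>_def)
    obtain k where k: "k \<le> n" "\<forall>y\<in>#R. \<delta> \<le> \<bar>(a + (2 * real k + 1) * \<delta>) - Re y\<bar>"
      using pigeon[of R n \<delta> a] sizeR d0 by auto
    define x where "x = a + (2 * real k + 1) * \<delta>"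
    have "(2 * real k + 1) * \<delta> \<le> (2 * real n + 1) * \<delta>"
      using k(1) d0 by (intro mult_right_mono) auto
    moreover have "(2 * real n + 1) * \<delta> < L"
      using L0 by (simp add: \<delta>_def field_simps)
    moreover have "0 < (2 * real k + 1) * \<delta>" using d0 by simp
    ultimately have xin: "x \<in> {a<..<b}" unfolding x_def L_def by auto
    have far: "\<forall>y\<in>#R. \<delta> \<le> cmod (complex_of_real x - y)"
    proof
      fix y assume "y \<in># R"
      then have "\<delta> \<le> \<bar>x - Re y\<bar>" using k(2) x_def by auto
      also have "\<dots> = \<bar>Re (complex_of_real x - y)\<bar>" by simp
      also have "\<dots> \<le> cmod (complex_of_real x - y)" by (rule abs_Re_le_cmod)
      finally show "\<delta> \<le> cmod (complex_of_real x - y)" .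
    qed
    obtain \<alpha> where al: "\<alpha> \<in># R"
      and key: "(\<Prod>y\<in>#R-{#\<alpha>#}. cmod (\<alpha> - y)) * cmod (complex_of_real x - \<alpha>)
         \<le> 2 ^ (size R - 1) * (\<Prod>y\<in>#R. cmod (complex_of_real x - y))"
      using key1[OF Rne, of "complex_of_real x"] by blast
    define F where "F = (\<Prod>y\<in>#R-{#\<alpha>#}. cmod (\<alpha> - y))"
    define Pi where "Pi = (\<Prod>y\<in>#R. cmod (complex_of_real x - y))"
    have F0: "F \<ge> 0" unfolding F_def by (rule prod_mset_nonneg') simp
    have "A * Pi = \<bar>poly (map_poly real_of_int P) x\<bar>"
      using poly_eval[of P x] by (simp add: A_def Pi_def R_def)
    also have "\<dots> < A * Q powr (- w)" using small xin by (simp add: A_def)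
    finally have PiQ: "Pi < Q powr (- w)" using A0 by simp
    have "F * \<delta> \<le> F * cmod (complex_of_real x - \<alpha>)"
      using far al F0 by (intro mult_left_mono) auto
    also have "\<dots> \<le> 2 ^ (n - 1) * Pi" using key by (simp add: F_def Pi_def sizeR)
    also have "\<dots> \<le> 2 ^ (n - 1) * Q powr (- w)" using PiQ by simp
    finally have Fd: "F * \<delta> \<le> 2 ^ (n - 1) * Q powr (- w)" .
    have "F * L = 2 * (real n + 1) * (F * \<delta>)" by (simp add: \<delta>_def field_simps)
    also have "\<dots> \<le> 2 * (real n + 1) * (2 ^ (n - 1) * Q powr (- w))"
      using Fd by (intro mult_left_mono) auto
    also have "\<dots> = K * Q powr (- w)"
      using assms(1) by (simp add: K_def power_eq_if)
    finally have FL: "F * L \<le> K * Q powr (- w)" .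
    have "F * (c * Q powr (- (w / 2) - \<eta>)) \<le> F * L"
      using Lc F0 by (intro mult_left_mono) (auto simp: L_def)
    also note FL
    finally have "F * c * Q powr (- (w / 2) - \<eta>) \<le> K * Q powr (- w)" by (simp add: mult.assoc)
    then have "F * c * Q powr (- (w / 2) - \<eta>) * Q powr (w / 2 + \<eta>) \<le> K * Q powr (- w) * Q powr (w / 2 + \<eta>)"
      by (intro mult_right_mono) auto
    also have "K * Q powr (- w) * Q powr (w / 2 + \<eta>) = K * Q powr (- (w / 2) + \<eta>)"
      by (simp add: mult.assoc flip: powr_add)
    also have "F * c * Q powr (- (w / 2) - \<eta>) * Q powr (w / 2 + \<eta>) = F * c"
      using Q1 by (simp add: mult.assoc flip: powr_add)
    finally have Fc: "F * c \<le> K * Q powr (- (w / 2) + \<eta>)" .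
    then have "(F * c) ^ 2 \<le> (K * Q powr (- (w / 2) + \<eta>)) ^ 2"
      using F0 assms(2) by (intro power_mono) auto
    also have "\<dots> = K ^ 2 * Q powr (- w + 2 * \<eta>)"
      using Q1 by (simp add: power_mult_distrib powr_realpow[symmetric] powr_powr algebra_simps)
    finally have F2: "F ^ 2 \<le> C * Q powr (- w + 2 * \<eta>)"
      using assms(2) by (simp add: C_def power_mult_distrib field_simps)
    define r where "r = root_dist P"
    have rbound: "cmod (u - v) \<le> r" if "u \<in># R" "v \<in># R" for u v
    proof -
      have eq: "{cmod (x - y) | x y. x \<in># croots P \<and> y \<in># croots P} =
          (\<lambda>(x, y). cmod (x - y)) ` (set_mset R \<times> set_mset R)"
        by (auto simp: R_def)
      show ?thesis unfolding r_def root_dist_def eq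
        by (rule Max_ge) (use that in auto)
    qed
    have r0: "r > 0" using rd Q1 by (simp add: r_def)
    have DD: "(\<Prod>x\<in>#R. \<Prod>y\<in>#(R - {#x#}). cmod (x - y)) \<le> F ^ 2 * r ^ ((n - 1) * (n - 2))"
      using key2[OF al rbound] by (simp add: F_def sizeR)
    have rp: "r ^ ((n - 1) * (n - 2)) = Q powr (- real ((n - 1) * (n - 2)) * \<kappa>)"
      using Q1 rd by (simp add: r_def powr_realpow[symmetric] powr_powr mult.commute)
    have "cmod (discriminant P) = A ^ (2 * n - 2) * (\<Prod>x\<in>#R. \<Prod>y\<in>#(R - {#x#}). cmod (x - y))"
      unfolding discriminant_def Let_def by (simp add: norm_mult norm_power norm_prod_mset_c A_def R_def degP)
    also have "\<dots> \<le> A ^ (2 * n - 2) * (F ^ 2 * r ^ ((n - 1) * (n - 2)))"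
      using DD A0 by (intro mult_left_mono) auto
    also have "\<dots> \<le> A ^ (2 * n - 2) * (C * Q powr (- w + 2 * \<eta>) * r ^ ((n - 1) * (n - 2)))"
      using F2 A0 r0 by (intro mult_left_mono mult_right_mono) auto
    also have "\<dots> = C * A ^ (2 * n - 2) * (Q powr (- w + 2 * \<eta>) * Q powr (- real ((n - 1) * (n - 2)) * \<kappa>))"
      unfolding rp by (simp add: mult_ac)
    also have "Q powr (- w + 2 * \<eta>) * Q powr (- real ((n - 1) * (n - 2)) * \<kappa>) = Q powr (- w - real ((n - 1) * (n - 2)) * \<kappa> + 2 * \<eta>)"
      unfolding powr_add[symmetric] by (rule arg_cong[where f="\<lambda>t. Q powr t"]) simp
    finally show "cmod (discriminant P) \<le>
        C * \<bar>real_of_int (lead_coeff P)\<bar> ^ (2 * n - 2) *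
          Q powr (- w - real ((n - 1) * (n - 2)) * \<kappa> + 2 * \<eta>)" by (simp add: A_def)
  qed
qed

end
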